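(* Let $G=\prod_{i=1}^t K_{n_i}$ with all $n_i\ge 2$, and regard $\{0,1\}^t\subseteq V(G)$. Let $M\subseteq\{0,1\}^t$ be a set such that no two distinct vectors in $M$ agree in exactly $t-1$ coordinates, and no two vectors in $M$ differ in all $t$ coordinates. Then $\{0,1\}^t\setminus M$ is a dominating set of $G$.
   Context: $K_m$ is the complete graph on $m$ vertices; vertices of the direct product $\prod_{i=1}^t K_{n_i}$ are tuples $(x_1,\dots,x_t)$ with $x_i\in\{0,\dots,n_i-1\}$, two tuples being adjacent iff they differ in every coordinate. A set $D$ is dominating if every vertex is in $D$ or adjacent to a vertex of $D$. *)

theory Defs
  imports Main
begin

text \<open>Vertices of the direct product of complete graphs K_{n_0} x ... x K_{n_{t-1}}:
  tuples represented as functions nat => nat, extensional (value 0 outside {0..<t}).\<close>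
definition prod_vertices :: "nat \<Rightarrow> (nat \<Rightarrow> nat) \<Rightarrow> (nat \<Rightarrow> nat) set" where
  "prod_vertices t n = {x. (\<forall>i<t. x i < n i) \<and> (\<forall>i\<ge>t. x i = 0)}"

definition prod_adj :: "nat \<Rightarrow> (nat \<Rightarrow> nat) \<Rightarrow> (nat \<Rightarrow> nat) \<Rightarrow> bool" where
  "prod_adj t x y \<longleftrightarrow> (\<forall>i<t. x i \<noteq> y i)"

definition dominating :: "'v set \<Rightarrow> ('v \<Rightarrow> 'v \<Rightarrow> bool) \<Rightarrow> 'v set \<Rightarrow> bool" where
  "dominating V adj D \<longleftrightarrow> D \<subseteq> V \<and> (\<forall>v\<in>V. v \<in> D \<or> (\<exists>d\<in>D. adj v d))"

definition binary_vectors :: "nat \<Rightarrow> (nat \<Rightarrow> nat) set" where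
  "binary_vectors t = {x. (\<forall>i<t. x i \<in> {0, 1}) \<and> (\<forall>i\<ge>t. x i = 0)}"

end

theory Submission
  imports Defs
begin

theorem theorem4p4:
  fixes t :: nat and n :: "nat \<Rightarrow> nat" and M :: "(nat \<Rightarrow> nat) set"
  assumes "\<forall>i<t. n i \<ge> 2"
    and "M \<subseteq> binary_vectors t"
    and "\<forall>x\<in>M. \<forall>y\<in>M. x \<noteq> y \<longrightarrow> card {i. i < t \<and> x i = y i} \<noteq> t - 1"
    and "\<forall>x\<in>M. \<forall>y\<in>M. \<not> (\<forall>i<t. x i \<noteq> y i)"
  shows "dominating (prod_vertices t n) (prod_adj t) (binary_vectors t - M)"
  unfolding dominating_def
proof (intro conjI ballI)
  show "binary_vectors t - M \<subseteq> prod_vertices t n"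
    using assms(1) unfolding binary_vectors_def prod_vertices_def by force
next
  fix v assume vV: "v \<in> prod_vertices t n"
  show "v \<in> binary_vectors t - M \<or> (\<exists>d\<in>binary_vectors t - M. prod_adj t v d)"
  proof (cases "v \<in> binary_vectors t")
    case True
    show ?thesis
    proof (cases "v \<in> M")
      case False with True show ?thesis by blast
    next
      case vM: True
      define c where "c = (\<lambda>i. if i < t then 1 - v i else 0)"
      have cB: "c \<in> binary_vectors t" unfolding c_def binary_vectors_def by auto
      have adj: "\<forall>i<t. v i \<noteq> c i" using True unfolding c_def binary_vectors_def by force
      have "c \<notin> M" using assms(4) vM adj by blast
      then show ?thesis using cB adj unfolding prod_adj_def by blast
    qed
  next
    case False
    then obtain k where k: "k < t" "v k \<notin> {0,1}"
      using vV unfolding binary_vectors_def prod_vertices_def by auto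
    define d where "d = (\<lambda>b::nat. \<lambda>i. if i < t then (if i = k then b else if v i = 0 then 1 else 0) else (0::nat))"
    have dB: "d b \<in> binary_vectors t" if "b \<in> {0,1}" for b
      using that unfolding d_def binary_vectors_def by auto
    have dadj: "prod_adj t v (d b)" if "b \<in> {0,1}" for b
      using that k unfolding d_def prod_adj_def by auto
    have "{i. i < t \<and> d 0 i = d 1 i} = {0..<t} - {k}" unfolding d_def by auto
    hence "card {i. i < t \<and> d 0 i = d 1 i} = t - 1" using k by simp
    moreover have "d 0 \<noteq> d 1" unfolding d_def using k by (metis zero_neq_one)
    ultimately have "d 0 \<notin> M \<or> d 1 \<notin> M" using assms(3) by blast
    then show ?thesis using dB dadj by blast
  qed
qed

end
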